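(* The action of $\mathfrak{gl}(\mathring{\mathfrak g})[t,t^{-1}]\rtimes\mathbb C\mathsf D$ on $\overline{\mathrm{Der}}\,\mathcal O$ given by $x\cdot v=[\iota(x),v]$ stabilizes the Lie subalgebra $\mathrm{Der}_w\mathcal O$.
   Context: $\mathring{\mathfrak g}$ is a finite-dimensional simple complex Lie algebra with basis $\{J_a\}_{a\in\mathcal I}$ ($\mathcal I$ finite). $\mathcal O=\mathbb C[X^{a,n}]_{(a,n)\in\mathcal I\times\mathbb Z}$, $D_{a,n}=\partial/\partial X^{a,n}$, $\overline{\mathrm{Der}}\,\mathcal O$ is the Lie algebra of possibly infinite formal sums $\sum_{(a,n)}P^{a,n}(X)D_{a,n}$ (bracket as commutator of derivations; each coefficient a finite sum). A collection $\{P^{a,n}\}$ has widening gap if for every $K\ge1$, $P^{a,n}\in\mathbb C[X^{b,m}:|m|<|n|-K]$ for all $a$, for all but finitely many $n\in\mathbb Z$; $\mathrm{Der}_w\mathcal O$ is the Lie subalgebra of sums with widening-gap coefficients. The loop algebra $\mathfrak{gl}(\mathring{\mathfrak g})[t,t^{-1}]$ has basis $S^a_{b,n}$ ($a,b\in\mathcal I$, $n\in\mathbb Z$) with $[S^a_{b,n},S^c_{d,m}]=\delta^c_bS^a_{d,n+m}-\delta^a_dS^c_{b,n+m}$, and $\mathsf D$ is the derivation with $[\mathsf D,S^a_{b,n}]=nS^a_{b,n}$. The embedding $\iota:\mathfrak{gl}(\mathring{\mathfrak g})[t,t^{-1}]\rtimes\mathbb C\mathsf D\hookrightarrow\overline{\mathrm{Der}}\,\mathcal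 O$ is $\iota(S^b_{c,n})=\sum_{m\in\mathbb Z}X^{b,m-n}D_{c,m}$, $\iota(\mathsf D)=\sum_{a\in\mathcal I,m\in\mathbb Z}mX^{a,m}D_{a,m}$. *)

theory Defs
  imports Complex_Main "HOL-Library.Poly_Mapping"
begin

text \<open>Variables X^{a,n} are indexed by pairs (a,n) with a in a finite index type 'i
  (the basis index set of the simple Lie algebra) and n an integer.
  Monomials are finitely supported exponent maps; polynomials are finitely
  supported coefficient maps on monomials (the polynomial ring O).\<close>

type_synonym 'i mon = "('i \<times> int) \<Rightarrow>\<^sub>0 nat"
type_synonym 'i cpoly = "'i mon \<Rightarrow>\<^sub>0 complex"

text \<open>An element of overline Der O: the family of coefficients P^{a,n}.\<close>
type_synonym 'i der = "('i \<times> int) \<Rightarrow> 'i cpoly"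

definition Xv :: "('i \<times> int) \<Rightarrow> 'i cpoly" where
  "Xv u = Poly_Mapping.single (Poly_Mapping.single u 1) 1"

definition cconst :: "complex \<Rightarrow> 'i cpoly" where
  "cconst z = Poly_Mapping.single 0 z"

definition vars :: "'i cpoly \<Rightarrow> ('i \<times> int) set" where
  "vars p = {u. \<exists>m\<in>Poly_Mapping.keys p. u \<in> Poly_Mapping.keys m}"

definition pderiv_var :: "('i \<times> int) \<Rightarrow> 'i cpoly \<Rightarrow> 'i cpoly" where
  "pderiv_var u p = (\<Sum>m\<in>Poly_Mapping.keys p.
      Poly_Mapping.single (m - Poly_Mapping.single u (1::nat))
        (of_nat (Poly_Mapping.lookup (m :: 'i mon) u) * Poly_Mapping.lookup p m))"

text \<open>Commutator of derivations sum P^u D_u and sum Q^u D_u; the coefficient of D_w is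
  sum_u (P^u D_u Q^w - Q^u D_u P^w), where only the (finitely many) variables
  occurring in Q^w resp. P^w contribute.\<close>
definition der_bracket :: "'i der \<Rightarrow> 'i der \<Rightarrow> 'i der" where
  "der_bracket P Q = (\<lambda>w.
      (\<Sum>u\<in>vars (Q w). P u * pderiv_var u (Q w))
    - (\<Sum>u\<in>vars (P w). Q u * pderiv_var u (P w)))"

definition widening_gap :: "'i der \<Rightarrow> bool" where
  "widening_gap P \<longleftrightarrow> (\<forall>K::int. K \<ge> 1 \<longrightarrow>
      finite {n::int. \<exists>a. \<not> vars (P (a, n)) \<subseteq> {(b, m). \<bar>m\<bar> < \<bar>n\<bar> - K}})"

definition Der_w :: "'i der set" where
  "Der_w = {P. widening_gap P}"

text \<open>An element x is
  sum c(b,c',n) S^b_{c',n} + d D, with finitely supported coefficients c.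
  iota(S^b_{c',n}) = sum_m X^{b,m-n} D_{c',m}; iota(D) = sum_{a,m} m X^{a,m} D_{a,m}.\<close>
definition iota :: "(('i \<times> 'i \<times> int) \<Rightarrow>\<^sub>0 complex) \<Rightarrow> complex \<Rightarrow> 'i der" where
  "iota c d = (\<lambda>(a, m).
      (\<Sum>(b, c', n)\<in>Poly_Mapping.keys c.
          if c' = a then cconst (Poly_Mapping.lookup c (b, c', n)) * Xv (b, m - n) else 0)
    + cconst (d * of_int m) * Xv (a, m))"

end

theory Submission
  imports Defs
begin

lemma vars_mono_keys: "Poly_Mapping.keys p \<subseteq> Poly_Mapping.keys q \<Longrightarrow> vars p \<subseteq> vars q"
  unfolding vars_def by blast

lemma vars_add: "vars (p + q) \<subseteq> vars p \<union> vars q"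
  using keys_add[of p q] unfolding vars_def by blast

lemma vars_diff: "vars (p - q) \<subseteq> vars p \<union> vars q"
  using keys_diff[of p q] unfolding vars_def by blast

lemma vars_sum: "vars (sum f A) \<subseteq> (\<Union>a\<in>A. vars (f a))"
  using keys_sum[of f A] unfolding vars_def by blast

lemma keys_nat_add: "Poly_Mapping.keys ((m::'a \<Rightarrow>\<^sub>0 nat) + n) \<subseteq> Poly_Mapping.keys m \<union> Poly_Mapping.keys n"
  by (rule keys_add)

lemma vars_mult: "vars (p * q) \<subseteq> vars p \<union> vars q"
proof
  fix u assume "u \<in> vars (p * q)"
  then obtain m where m: "m \<in> Poly_Mapping.keys (p*q)" "u \<in> Poly_Mapping.keys m" unfolding vars_def by blast
  then obtain a b where "m = a + b" "a \<in> Poly_Mapping.keys p" "b \<in> Poly_Mapping.keys q" using keys_mult[of p q] by blast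
  with m keys_add[of a b] show "u \<in> vars p \<union> vars q" unfolding vars_def by blast
qed

lemma vars_cconst: "vars (cconst z) = {}"
  unfolding vars_def cconst_def by auto

lemma vars_Xv: "vars (Xv u) \<subseteq> {u}"
  unfolding vars_def Xv_def by auto

lemma vars_cX: "vars (cconst z * Xv u) \<subseteq> {u}"
  using vars_mult[of "cconst z" "Xv u"] vars_cconst vars_Xv by blast

lemma keys_minus_nat: "Poly_Mapping.keys ((m::'a \<Rightarrow>\<^sub>0 nat) - n) \<subseteq> Poly_Mapping.keys m"
  by (auto simp: in_keys_iff lookup_minus)

lemma keys_pderiv: "Poly_Mapping.keys (pderiv_var u p) \<subseteq> (\<Union>m\<in>Poly_Mapping.keys p. Poly_Mapping.keys (Poly_Mapping.single (m - Poly_Mapping.single u (1::nat))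
        (of_nat (Poly_Mapping.lookup m u) * Poly_Mapping.lookup p m)))"
  unfolding pderiv_var_def by (rule keys_sum)

lemma vars_pderiv: "vars (pderiv_var u p) \<subseteq> vars p"
proof
  fix x assume "x \<in> vars (pderiv_var u p)"
  then obtain m' where m': "m' \<in> Poly_Mapping.keys (pderiv_var u p)" "x \<in> Poly_Mapping.keys m'"
    unfolding vars_def by blast
  have mem: "m' \<in> (\<Union>m\<in>Poly_Mapping.keys p. Poly_Mapping.keys (Poly_Mapping.single (m - Poly_Mapping.single u (1::nat))
        (of_nat (Poly_Mapping.lookup m u) * Poly_Mapping.lookup p m)))"
    using subsetD[OF keys_pderiv m'(1)] .
  from mem obtain m where m: "m \<in> Poly_Mapping.keys p" "m' \<in> Poly_Mapping.keys (Poly_Mapping.single (m - Poly_Mapping.single u (1::nat))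
        (of_nat (Poly_Mapping.lookup m u) * Poly_Mapping.lookup p m))"
    by (rule UN_E)
  from m(2) have "m' = m - Poly_Mapping.single u 1" by (simp split: if_splits)
  then have "x \<in> Poly_Mapping.keys m" using m'(2) keys_minus_nat[of m "Poly_Mapping.single u 1"] by (metis subsetD)
  then show "x \<in> vars p" using m(1) unfolding vars_def by blast
qed

lemma vars_pderiv_lin:
  assumes "Poly_Mapping.keys p \<subseteq> range (\<lambda>v. Poly_Mapping.single v (1::nat))"
  shows "vars (pderiv_var u p) = {}"
proof -
  have "Poly_Mapping.keys (pderiv_var u p) \<subseteq> {0}"
  proof
    fix m' assume m'1: "m' \<in> Poly_Mapping.keys (pderiv_var u p)"
    have mem: "m' \<in> (\<Union>m\<in>Poly_Mapping.keys p. Poly_Mapping.keys (Poly_Mapping.single (m - Poly_Mapping.single u (1::nat))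
        (of_nat (Poly_Mapping.lookup m u) * Poly_Mapping.lookup p m)))"
      using subsetD[OF keys_pderiv m'1] .
    from mem obtain m where m: "m \<in> Poly_Mapping.keys p" "m' \<in> Poly_Mapping.keys (Poly_Mapping.single (m - Poly_Mapping.single u (1::nat))
        (of_nat (Poly_Mapping.lookup m u) * Poly_Mapping.lookup p m))"
      by (rule UN_E)
    obtain v where v: "m = Poly_Mapping.single v 1" using assms m(1) by blast
    show "m' \<in> {0}"
    proof (cases "v = u")
      case True then show ?thesis using m(2) v by (simp split: if_splits)
    next
      case False then have "Poly_Mapping.lookup m u = 0" using v by (simp add: lookup_single)
      then show ?thesis using m(2) by simp
    qed
  qed
  then show ?thesis unfolding vars_def by auto
qed

lemma cX_eq: "cconst z * Xv u = Poly_Mapping.single (Poly_Mapping.single u 1) z"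
  unfolding cconst_def Xv_def by (simp add: mult_single)

lemma iota_vars_keys:
  fixes c :: "('i \<times> 'i \<times> int) \<Rightarrow>\<^sub>0 complex"
  shows "vars (iota c d (a, m)) \<subseteq> {(b, m - k) | b k. k \<in> snd ` snd ` Poly_Mapping.keys c} \<union> {(a, m)}
    \<and> Poly_Mapping.keys (iota c d (a, m)) \<subseteq> range (\<lambda>v. Poly_Mapping.single v (1::nat))"
proof -
  define f where "f = (\<lambda>(b, c', n). if c' = a then cconst (Poly_Mapping.lookup c (b, c', n)) * Xv (b, m - n) else (0::'i cpoly))"
  have eq: "iota c d (a, m) = sum f (Poly_Mapping.keys c) + cconst (d * of_int m) * Xv (a, m)"
    unfolding iota_def f_def by simp
  have fk: "Poly_Mapping.keys (f t) \<subseteq> {Poly_Mapping.single (fst t, m - snd (snd t)) 1}" for t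
    unfolding f_def by (cases t) (auto simp: cX_eq)
  have fv: "vars (f t) \<subseteq> {(fst t, m - snd (snd t))}" for t
    using fk[of t] unfolding vars_def by auto
  have "vars (iota c d (a, m)) \<subseteq> vars (sum f (Poly_Mapping.keys c)) \<union> vars (cconst (d * of_int m) * Xv (a, m))"
    unfolding eq by (rule vars_add)
  also have "\<dots> \<subseteq> (\<Union>t\<in>Poly_Mapping.keys c. vars (f t)) \<union> vars (cconst (d * of_int m) * Xv (a, m))"
    by (rule Un_mono[OF vars_sum subset_refl])
  also have "\<dots> \<subseteq> {(b, m - k) | b k. k \<in> snd ` snd ` Poly_Mapping.keys c} \<union> {(a, m)}"
  proof (intro Un_mono UN_least vars_cX)
    fix t assume t: "t \<in> Poly_Mapping.keys c"
    show "vars (f t) \<subseteq> {(b, m - k) | b k. k \<in> snd ` snd ` Poly_Mapping.keys c}"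
    proof -
      obtain b c' k where tt: "t = (b, c', k)" by (cases t) blast
      have "k \<in> snd ` snd ` Poly_Mapping.keys c" using t tt by force
      then have "(b, m - k) \<in> {(b, m - k) | b k. k \<in> snd ` snd ` Poly_Mapping.keys c}" by blast
      then have "{(b, m - k)} \<subseteq> {(b, m - k) | b k. k \<in> snd ` snd ` Poly_Mapping.keys c}" by blast
      moreover have "vars (f t) \<subseteq> {(b, m - k)}" using fv[of t] tt by simp
      ultimately show ?thesis by (rule subset_trans[rotated])
    qed
  qed
  finally have 1: "vars (iota c d (a, m)) \<subseteq> {(b, m - k) | b k. k \<in> snd ` snd ` Poly_Mapping.keys c} \<union> {(a, m)}" .
  have "Poly_Mapping.keys (iota c d (a, m)) \<subseteq> Poly_Mapping.keys (sum f (Poly_Mapping.keys c)) \<union> Poly_Mapping.keys (cconst (d * of_int m) * Xv (a, m))"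
    unfolding eq by (rule keys_add)
  also have "\<dots> \<subseteq> (\<Union>t\<in>Poly_Mapping.keys c. Poly_Mapping.keys (f t)) \<union> Poly_Mapping.keys (cconst (d * of_int m) * Xv (a, m))"
    by (rule Un_mono[OF keys_sum subset_refl])
  also have "\<dots> \<subseteq> range (\<lambda>v. Poly_Mapping.single v (1::nat))"
  proof (intro Un_least UN_least)
    fix t show "Poly_Mapping.keys (f t) \<subseteq> range (\<lambda>v. Poly_Mapping.single v (1::nat))"
      using fk[of t] by blast
  next
    show "Poly_Mapping.keys (cconst (d * of_int m) * Xv (a, m)) \<subseteq> range (\<lambda>v. Poly_Mapping.single v (1::nat))"
      unfolding cX_eq by simp
  qed
  finally have 2: "Poly_Mapping.keys (iota c d (a, m)) \<subseteq> range (\<lambda>v. Poly_Mapping.single v (1::nat))" .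
  show ?thesis using 1 2 by (rule conjI)
qed

lemma vars_mult_pd: "vars (q * pderiv_var u p) \<subseteq> vars q \<union> vars p"
  using vars_mult[of q "pderiv_var u p"] vars_pderiv[of u p] by blast

lemma vars_mult_pd_lin:
  assumes "Poly_Mapping.keys p \<subseteq> range (\<lambda>v. Poly_Mapping.single v (1::nat))"
  shows "vars (q * pderiv_var u p) \<subseteq> vars q"
  using vars_mult[of q "pderiv_var u p"] vars_pderiv_lin[OF assms, of u] by blast

theorem lemma3p6:
  fixes c :: "('i::finite \<times> 'i \<times> int) \<Rightarrow>\<^sub>0 complex"
    and d :: complex
    and v :: "'i der"
  assumes "v \<in> Der_w"
  shows "der_bracket (iota c d) v \<in> Der_w"
proof -
  define N where "N = snd ` snd ` Poly_Mapping.keys c"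
  have finN: "finite N" unfolding N_def by simp
  define L where "L = Max (abs ` N \<union> {0})"
  have L: "\<And>k. k \<in> N \<Longrightarrow> \<bar>k\<bar> \<le> L" unfolding L_def using finN by (intro Max_ge) auto
  have L0: "0 \<le> L" unfolding L_def using finN by (intro Max_ge) auto
  let ?P = "iota c d"
  have Pv: "\<And>a m. vars (?P (a, m)) \<subseteq> {(b, m - k) | b k. k \<in> N} \<union> {(a, m)}"
    unfolding N_def by (rule conjunct1[OF iota_vars_keys])
  have Pk: "\<And>a m. Poly_Mapping.keys (?P (a, m)) \<subseteq> range (\<lambda>v. Poly_Mapping.single v (1::nat))"
    by (rule conjunct2[OF iota_vars_keys])
  have wv: "\<forall>K::int. K \<ge> 1 \<longrightarrow>
      finite {n::int. \<exists>a. \<not> vars (v (a, n)) \<subseteq> {(b, m). \<bar>m\<bar> < \<bar>n\<bar> - K}}"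
    using assms unfolding Der_w_def widening_gap_def by simp
  show ?thesis unfolding Der_w_def widening_gap_def mem_Collect_eq
  proof (intro allI impI)
    fix K :: int assume K: "K \<ge> 1"
    define F where "F = {n::int. \<exists>a. \<not> vars (v (a, n)) \<subseteq> {(b, m). \<bar>m\<bar> < \<bar>n\<bar> - (K + L)}}"
    have "K + L \<ge> 1" using K L0 by linarith
    then have finF: "finite F" using wv unfolding F_def by blast
    have sub: "{n::int. \<exists>a. \<not> vars (der_bracket ?P v (a, n)) \<subseteq> {(b, m). \<bar>m\<bar> < \<bar>n\<bar> - K}}
       \<subseteq> F \<union> (\<lambda>(x, k). x + k) ` (F \<times> N)"
    proof (rule subsetI, rule ccontr)
      fix n assume n: "n \<in> {n::int. \<exists>a. \<not> vars (der_bracket ?P v (a, n)) \<subseteq> {(b, m). \<bar>m\<bar> < \<bar>n\<bar> - K}}"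
        and nn: "n \<notin> F \<union> (\<lambda>(x, k). x + k) ` (F \<times> N)"
      then obtain a where a: "\<not> vars (der_bracket ?P v (a, n)) \<subseteq> {(b, m). \<bar>m\<bar> < \<bar>n\<bar> - K}" by blast
      define G :: "('i \<times> int) set" where "G = {(b, m). \<bar>m\<bar> < \<bar>n\<bar> - K}"
      have nF: "n \<notin> F" using nn by blast
      have vn: "vars (v (a, n)) \<subseteq> {(b, m). \<bar>m\<bar> < \<bar>n\<bar> - (K + L)}" using nF unfolding F_def by blast
      have vnG: "vars (v (a, n)) \<subseteq> G"
      proof
        fix x assume "x \<in> vars (v (a, n))"
        then show "x \<in> G" using vn L0 unfolding G_def by (cases x) auto
      qed
      have S1: "vars (\<Sum>u\<in>vars (v (a, n)). ?P u * pderiv_var u (v (a, n))) \<subseteq> G"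
      proof -
        have "vars (\<Sum>u\<in>vars (v (a, n)). ?P u * pderiv_var u (v (a, n)))
          \<subseteq> (\<Union>u\<in>vars (v (a, n)). vars (?P u * pderiv_var u (v (a, n))))"
          by (rule vars_sum)
        also have "\<dots> \<subseteq> (\<Union>u\<in>vars (v (a, n)). vars (?P u) \<union> vars (v (a, n)))"
          by (rule UN_mono[OF subset_refl vars_mult_pd])
        also have "\<dots> \<subseteq> G"
        proof (intro UN_least Un_least vnG)
          fix u assume u: "u \<in> vars (v (a, n))"
          obtain b m where bm: "u = (b, m)" by fastforce
          have mn: "\<bar>m\<bar> < \<bar>n\<bar> - (K + L)" using u vn bm by blast
          show "vars (?P u) \<subseteq> G"
          proof
            fix x assume "x \<in> vars (?P u)"
            then have "x \<in> {(b', m - k) | b' k. k \<in> N} \<union> {(b, m)}" using Pv[of b m] bm by blast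
            then show "x \<in> G"
            proof
              assume "x \<in> {(b', m - k) | b' k. k \<in> N}"
              then obtain b' k where x: "x = (b', m - k)" "k \<in> N" by blast
              have "\<bar>m - k\<bar> \<le> \<bar>m\<bar> + L" using L[OF x(2)] by linarith
              then show "x \<in> G" using mn unfolding x G_def by simp
            next
              assume "x \<in> {(b, m)}"
              then show "x \<in> G" using mn L0 unfolding G_def by simp
            qed
          qed
        qed
        finally show ?thesis .
      qed
      have S2: "vars (\<Sum>u\<in>vars (?P (a, n)). v u * pderiv_var u (?P (a, n))) \<subseteq> G"
      proof -
        have "vars (\<Sum>u\<in>vars (?P (a, n)). v u * pderiv_var u (?P (a, n)))
          \<subseteq> (\<Union>u\<in>vars (?P (a, n)). vars (v u * pderiv_var u (?P (a, n))))"
          by (rule vars_sum)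
        also have "\<dots> \<subseteq> (\<Union>u\<in>vars (?P (a, n)). vars (v u))"
          by (rule UN_mono[OF subset_refl vars_mult_pd_lin[OF Pk]])
        also have "\<dots> \<subseteq> G"
        proof (intro UN_least)
          fix u assume u: "u \<in> vars (?P (a, n))"
          show "vars (v u) \<subseteq> G"
          proof (cases "u = (a, n)")
            case True then show ?thesis using vnG by simp
          next
            case False
            have "u \<in> {(b, n - k) | b k. k \<in> N}" using u Pv[of a n] False by blast
            then obtain b k where bk: "u = (b, n - k)" "k \<in> N" by blast
            have "n - k \<notin> F"
            proof
              assume "n - k \<in> F"
              then have "n \<in> (\<lambda>(x, k). x + k) ` (F \<times> N)" using bk(2)
                by (intro image_eqI[of _ _ "(n - k, k)"]) auto
              then show False using nn by blast
            qed
            then have vk: "vars (v (b, n - k)) \<subseteq> {(b, m). \<bar>m\<bar> < \<bar>n - k\<bar> - (K + L)}"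
              unfolding F_def by blast
            have nk: "\<bar>n - k\<bar> \<le> \<bar>n\<bar> + L" using L[OF bk(2)] by linarith
            show ?thesis
            proof
              fix x assume "x \<in> vars (v u)"
              then have "x \<in> {(b, m). \<bar>m\<bar> < \<bar>n - k\<bar> - (K + L)}" using vk bk(1) by blast
              then show "x \<in> G" using nk unfolding G_def by (cases x) simp
            qed
          qed
        qed
        finally show ?thesis .
      qed
      have "vars (der_bracket ?P v (a, n)) \<subseteq> G"
        unfolding der_bracket_def using order.trans[OF vars_diff Un_least[OF S1 S2]] .
      then show False using a unfolding G_def by blast
    qed
    have "finite (F \<union> (\<lambda>(x, k). x + k) ` (F \<times> N))" using finF finN by simp
    then show "finite {n::int. \<exists>a. \<not> vars (der_bracket ?P v (a, n)) \<subseteq> {(b, m). \<bar>m\<bar> < \<bar>n\<bar> - K}}"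
      using sub finite_subset by blast
  qed
qed

end
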